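(* Let $A=\mathrm{diag}(G_1,\dots,G_m,[1])\in\mathbb{R}^{n\times n}$ (where the trailing block $[1]$ may or may not be present), with $G_j=\begin{bmatrix}c_j&s_j\\-s_j&c_j\end{bmatrix}$, $c_j^2+s_j^2=1$, $s_j\neq 0$, and $0<c_1<c_2<\cdots<c_m$. Let $v_0\in\mathbb{R}^n$ be a unit norm vector with $d(A,v_0)\geq 2$ and $v_0^{(1)}\neq 0$, and run the iteration ACI($1$) below. Then there exist an index $k_0$ and a number $0<\varrho<1$ such that for all $k\geq k_0$, $$\|v_{k+1}^{(j)}\|\leq\varrho\,\|v_k^{(j)}\|,\qquad j=2,\dots,m+1$$ (with $j=m+1$ included only when the block $[1]$ is present).
   Context: Block partitioning: every $v\in\mathbb{R}^n$ is written as $v=[v^{(1)};\dots;v^{(m)};v^{(m+1)}]$ with $v^{(j)}\in\mathbb{R}^2$ for $j=1,\dots,m$ (conforming with the blocks $G_j$) and $v^{(m+1)}\in\mathbb{R}$ (present only if the block $[1]$ is present). ACI($1$): for $k=0,1,2,\dots$: $\widetilde w_k=(A-\alpha_kI)v_k$ with $\alpha_k=v_k^TAv_k$; $w_k=\widetilde w_k/\|\widetilde w_k\|$; $\widetilde v_{k+1}=(A^T-\beta_kI)w_k$ with $\beta_k=w_k^TAw_k$; $v_{k+1}=\widetilde v_{k+1}/\|\widetilde v_{k+1}\|$. $d(A,v)$ is the grade of $v$ w.r.t. $A$ (degree of the monic polynomial $p$ of smallest degree with $p(A)v=0$); $\|\cdot\|$ is the Euclidean norm. *)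

theory Defs
  imports "Jordan_Normal_Form.Matrix" "HOL-Computational_Algebra.Polynomial"
begin

definition vnorm :: "real vec \<Rightarrow> real" where
  "vnorm v = sqrt (v \<bullet> v)"

(* dimension n = 2m (+1 if the trailing block [1] is present) *)
definition dimA :: "nat \<Rightarrow> bool \<Rightarrow> nat" where
  "dimA m t = 2 * m + (if t then 1 else 0)"

(* A = diag(G_1,...,G_m,[1]); block G_j (j = 1..m) occupies rows/cols 2(j-1), 2(j-1)+1
   (0-based), G_j = [[c_j, s_j], [-s_j, c_j]]; trailing [1] at index 2m if present *)
definition blockA :: "nat \<Rightarrow> bool \<Rightarrow> (nat \<Rightarrow> real) \<Rightarrow> (nat \<Rightarrow> real) \<Rightarrow> real mat" where
  "blockA m t c s = mat (dimA m t) (dimA m t) (\<lambda>(i, k).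
     if i < 2 * m \<and> k < 2 * m \<and> i div 2 = k div 2 then
       (let j = i div 2 + 1 in
         if i = k then c j
         else if even i then s j
         else - s j)
     else if i = 2 * m \<and> k = 2 * m then 1
     else 0)"

definition poly_apply :: "real mat \<Rightarrow> real poly \<Rightarrow> real vec \<Rightarrow> real vec" where
  "poly_apply A p v = vec (dim_row A) (\<lambda>r. \<Sum>i\<le>degree p. coeff p i * ((A ^\<^sub>m i) *\<^sub>v v) $ r)"

definition grade :: "real mat \<Rightarrow> real vec \<Rightarrow> nat" where
  "grade A v = (LEAST d. \<exists>p. lead_coeff p = 1 \<and> degree p = d \<and> poly_apply A p v = 0\<^sub>v (dim_row A))"

definition aci_step :: "real mat \<Rightarrow> real vec \<Rightarrow> real vec" where
  "aci_step A v = (let n = dim_row A;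
      \<alpha> = v \<bullet> (A *\<^sub>v v);
      wt = (A - \<alpha> \<cdot>\<^sub>m 1\<^sub>m n) *\<^sub>v v;
      w = (1 / vnorm wt) \<cdot>\<^sub>v wt;
      \<beta> = w \<bullet> (A *\<^sub>v w);
      vt = (transpose_mat A - \<beta> \<cdot>\<^sub>m 1\<^sub>m n) *\<^sub>v w
    in (1 / vnorm vt) \<cdot>\<^sub>v vt)"

primrec aci :: "real mat \<Rightarrow> real vec \<Rightarrow> nat \<Rightarrow> real vec" where
  "aci A v0 0 = v0"
| "aci A v0 (Suc k) = aci_step A (aci A v0 k)"

definition blk_norm :: "real vec \<Rightarrow> nat \<Rightarrow> real" where
  "blk_norm v j = sqrt ((v $ (2 * (j - 1)))\<^sup>2 + (v $ (2 * (j - 1) + 1))\<^sup>2)"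

definition last_norm :: "nat \<Rightarrow> real vec \<Rightarrow> real" where
  "last_norm m v = \<bar>v $ (2 * m)\<bar>"

end

theory Submission imports Defs Complex_Main begin

definition blk :: "nat \<Rightarrow> bool \<Rightarrow> (nat \<Rightarrow> real) \<Rightarrow> (nat \<Rightarrow> real) \<Rightarrow> real \<Rightarrow> real mat" where
  "blk m t c s e = mat (dimA m t) (dimA m t) (\<lambda>(i, k).
     if i < 2 * m \<and> k < 2 * m \<and> i div 2 = k div 2 then
         (if i = k then c (i div 2 + 1)
         else if even i then s (i div 2 + 1)
         else - s (i div 2 + 1))
     else if i = 2 * m \<and> k = 2 * m then e
     else 0)"

lemma blockA_blk: "blockA m t c s = blk m t c s 1"
  unfolding blockA_def blk_def Let_def by simp

lemma dimA_cases: "i < dimA m t \<Longrightarrow> i < 2*m \<or> (i = 2*m \<and> t)"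
  unfolding dimA_def by (auto split: if_splits)

lemma dimA_ge: "2*m \<le> dimA m t" unfolding dimA_def by auto

lemma blk_carrier[simp]: "blk m t c s e \<in> carrier_mat (dimA m t) (dimA m t)"
  and blk_dims[simp]: "dim_row (blk m t c s e) = dimA m t" "dim_col (blk m t c s e) = dimA m t"
  unfolding blk_def by auto

lemma blk_minus: "blk m t c s e - g \<cdot>\<^sub>m 1\<^sub>m (dimA m t) = blk m t (\<lambda>j. c j - g) s (e - g)"
proof (rule eq_matI)
  fix i k assume i: "i < dim_row (blk m t (\<lambda>j. c j - g) s (e - g))" and k: "k < dim_col (blk m t (\<lambda>j. c j - g) s (e - g))"
  hence i': "i < dimA m t" and k': "k < dimA m t" by auto
  show "(blk m t c s e - g \<cdot>\<^sub>m 1\<^sub>m (dimA m t)) $$ (i, k) = blk m t (\<lambda>j. c j - g) s (e - g) $$ (i, k)"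
    using i' k' dimA_cases[OF i'] dimA_cases[OF k'] unfolding blk_def by auto
qed auto

lemma blk_transpose: "transpose_mat (blk m t c s e) = blk m t c (\<lambda>j. - s j) e"
proof (rule eq_matI)
  fix i k assume i: "i < dim_row (blk m t c (\<lambda>j. - s j) e)" and k: "k < dim_col (blk m t c (\<lambda>j. - s j) e)"
  hence i': "i < dimA m t" and k': "k < dimA m t" by auto
  have aux: "i div 2 = k div 2 \<Longrightarrow> i \<noteq> k \<Longrightarrow> even i = odd k" by presburger
  show "transpose_mat (blk m t c s e) $$ (i, k) = blk m t c (\<lambda>j. - s j) e $$ (i, k)"
    using i' k' aux unfolding blk_def by auto
qed auto

lemma blk_mulvec:
  assumes v: "v \<in> carrier_vec (dimA m t)" and i: "i < dimA m t"
  shows "(blk m t c s e *\<^sub>v v) $ i =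
    (if i < 2*m then (if even i then c (i div 2 + 1) * v $ i + s (i div 2 + 1) * v $ Suc i
                      else - s (i div 2 + 1) * v $ (i - 1) + c (i div 2 + 1) * v $ i)
     else e * v $ i)"
proof -
  let ?n = "dimA m t"
  let ?g = "\<lambda>k. blk m t c s e $$ (i, k) * v $ k"
  have 0: "(blk m t c s e *\<^sub>v v) $ i = (\<Sum>k\<in>{0..<?n}. ?g k)"
    using v i by (simp add: scalar_prod_def)
  show ?thesis
  proof (cases "i < 2*m")
    case True
    show ?thesis
    proof (cases "even i")
      case ev: True
      have "Suc i < 2*m" using True ev by presburger
      hence S: "{i, Suc i} \<subseteq> {0..<?n}" using dimA_ge[of m t] by auto
      have z: "\<forall>k\<in>{0..<?n} - {i, Suc i}. ?g k = 0"
      proof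
        fix k assume "k \<in> {0..<?n} - {i, Suc i}"
        hence "k \<noteq> i" "k \<noteq> Suc i" by auto
        hence "i div 2 \<noteq> k div 2" using ev by presburger
        thus "?g k = 0" using True i \<open>k \<in> _\<close> unfolding blk_def by auto
      qed
      have "(\<Sum>k\<in>{0..<?n}. ?g k) = (\<Sum>k\<in>{i, Suc i}. ?g k)"
        by (rule sum.mono_neutral_right[OF _ S z]) simp
      also have "\<dots> = c (i div 2 + 1) * v $ i + s (i div 2 + 1) * v $ Suc i"
      proof -
        have d: "Suc i div 2 = i div 2" "Suc i < 2*m" using ev True by presburger+
        show ?thesis using d True ev S i dimA_ge[of m t] unfolding blk_def by auto
      qed
      finally show ?thesis using 0 True ev by simp
    next
      case od: False
      have S: "{i - 1, i} \<subseteq> {0..<?n}" using True i by auto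
      have z: "\<forall>k\<in>{0..<?n} - {i - 1, i}. ?g k = 0"
      proof
        fix k assume "k \<in> {0..<?n} - {i - 1, i}"
        hence "k \<noteq> i" "k \<noteq> i - 1" by auto
        hence "i div 2 \<noteq> k div 2" using od by presburger
        thus "?g k = 0" using True i \<open>k \<in> _\<close> unfolding blk_def by auto
      qed
      have "(\<Sum>k\<in>{0..<?n}. ?g k) = (\<Sum>k\<in>{i - 1, i}. ?g k)"
        by (rule sum.mono_neutral_right[OF _ S z]) simp
      also have "\<dots> = - s (i div 2 + 1) * v $ (i - 1) + c (i div 2 + 1) * v $ i"
      proof -
        have ne: "i - 1 \<noteq> i" using od by presburger
        have d: "(i - 1) div 2 = i div 2" "even (i - 1)" "i - 1 < 2*m" using od True by presburger+
        show ?thesis using ne d True S i unfolding blk_def by auto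
      qed
      finally show ?thesis using 0 True od by simp
    qed
  next
    case False
    hence i2: "i = 2*m" using dimA_cases[OF i] by auto
    have S: "{i} \<subseteq> {0..<?n}" using i by auto
    have z: "\<forall>k\<in>{0..<?n} - {i}. ?g k = 0"
      using i i2 unfolding blk_def by auto
    have "(\<Sum>k\<in>{0..<?n}. ?g k) = (\<Sum>k\<in>{i}. ?g k)"
      by (rule sum.mono_neutral_right[OF _ S z]) simp
    also have "\<dots> = e * v $ i" using i i2 unfolding blk_def by auto
    finally show ?thesis using 0 False by simp
  qed
qed

definition XX :: "nat \<Rightarrow> bool \<Rightarrow> real vec \<Rightarrow> nat \<Rightarrow> real" where
  "XX m t v j = (if j \<le> m then (v $ (2*(j-1)))\<^sup>2 + (v $ (2*(j-1)+1))\<^sup>2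
                 else if t then (v $ (2*m))\<^sup>2 else 0)"

definition cc :: "nat \<Rightarrow> (nat \<Rightarrow> real) \<Rightarrow> nat \<Rightarrow> real" where
  "cc m c j = (if j \<le> m then c j else 1)"

lemma XX_nonneg: "0 \<le> XX m t v j" unfolding XX_def by auto

lemma sum_pairs: "(\<Sum>i<2*(m::nat). h i) = (\<Sum>p<m. h (2*p) + h (2*p+1))"
proof (induction m)
  case (Suc m)
  have e: "2 * Suc m = Suc (Suc (2*m))" by simp
  show ?case unfolding e using Suc by (simp add: algebra_simps)
qed simp

lemma sum_dimA: "(\<Sum>i\<in>{0..<dimA m t}. h i) =
   (\<Sum>j\<in>{1..m}. h (2*(j-1)) + h (2*(j-1)+1)) + (if t then h (2*m) else 0)"
proof -
  have a: "(\<Sum>j\<in>{1..m}. h (2*(j-1)) + h (2*(j-1)+1)) = (\<Sum>p<m. h (2*p) + h (2*p+1))"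
    using sum.atLeast1_atMost_eq[of "\<lambda>j. h (2*(j-1)) + h (2*(j-1)+1)" m] by simp
  show ?thesis unfolding a dimA_def atLeast0LessThan
    by (cases t) (simp_all add: sum_pairs)
qed

lemma sumI: "(\<Sum>j\<in>{1..(m::nat)+1}. F j) = (\<Sum>j\<in>{1..m}. F j) + (F (m+1) :: real)"
  using sum.cl_ivl_Suc[of F 1 m] by simp

lemma quad:
  assumes v: "v \<in> carrier_vec (dimA m t)"
  shows "v \<bullet> (blk m t c S e *\<^sub>v v) = (\<Sum>j\<in>{1..m}. c j * XX m t v j) + (if t then e * (v$(2*m))\<^sup>2 else 0)"
proof -
  have "v \<bullet> (blk m t c S e *\<^sub>v v) = (\<Sum>i\<in>{0..<dimA m t}. v $ i * (blk m t c S e *\<^sub>v v) $ i)"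
    by (simp add: scalar_prod_def)
  also have "\<dots> = (\<Sum>j\<in>{1..m}. c j * XX m t v j) + (if t then e * (v$(2*m))\<^sup>2 else 0)"
    unfolding sum_dimA
  proof (intro arg_cong2[where f="(+)"] sum.cong refl)
    fix j assume j: "j \<in> {1..m}"
    have d: "2*(j-1) < 2*m" "2*(j-1)+1 < 2*m" "even (2*(j-1))" "odd (2*(j-1)+1)"
      "2*(j-1) div 2 + 1 = j" "(2*(j-1)+1) div 2 + 1 = j" "2*(j-1)+1-1 = 2*(j-1)" "Suc (2*(j-1)) = 2*(j-1)+1"
      using j by auto
    have l: "2*(j-1) < dimA m t" "2*(j-1)+1 < dimA m t" using d dimA_ge[of m t] by linarith+
    show "v $ (2*(j-1)) * (blk m t c S e *\<^sub>v v) $ (2*(j-1)) + v $ (2*(j-1)+1) * (blk m t c S e *\<^sub>v v) $ (2*(j-1)+1)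
        = c j * XX m t v j"
      unfolding blk_mulvec[OF v l(1)] blk_mulvec[OF v l(2)] using d j
      by (simp add: XX_def power2_eq_square algebra_simps)
  next
    show "(if t then v $ (2 * m) * (blk m t c S e *\<^sub>v v) $ (2 * m) else 0) = (if t then e * (v$(2*m))\<^sup>2 else 0)"
    proof (cases t)
      case True
      hence "2*m < dimA m t" unfolding dimA_def by auto
      thus ?thesis unfolding blk_mulvec[OF v \<open>2*m < dimA m t\<close>] using True by (simp add: power2_eq_square)
    qed simp
  qed
  finally show ?thesis .
qed

lemma norm_sq:
  assumes v: "v \<in> carrier_vec (dimA m t)"
  shows "v \<bullet> v = (\<Sum>j\<in>{1..m+1}. XX m t v j)"
proof -
  have "v \<bullet> v = (\<Sum>i\<in>{0..<dimA m t}. v $ i * v $ i)"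
    using v by (simp add: scalar_prod_def)
  also have "\<dots> = (\<Sum>j\<in>{1..m+1}. XX m t v j)"
    unfolding sum_dimA sumI
    by (intro arg_cong2[where f="(+)"] sum.cong refl) (auto simp: XX_def power2_eq_square)
  finally show ?thesis .
qed

lemma XX_lin:
  assumes v: "v \<in> carrier_vec (dimA m t)" and j: "j \<in> {1..m+1}"
  shows "XX m t (blk m t c S e *\<^sub>v v) j = (if j \<le> m then (c j)\<^sup>2 + (S j)\<^sup>2 else e\<^sup>2) * XX m t v j"
proof (cases "j \<le> m")
  case True
  have d: "2*(j-1) < 2*m" "2*(j-1)+1 < 2*m" "even (2*(j-1))" "odd (2*(j-1)+1)"
      "2*(j-1) div 2 + 1 = j" "(2*(j-1)+1) div 2 + 1 = j" "2*(j-1)+1-1 = 2*(j-1)" "Suc (2*(j-1)) = 2*(j-1)+1"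
      using j True by auto
  have l: "2*(j-1) < dimA m t" "2*(j-1)+1 < dimA m t" using d dimA_ge[of m t] by linarith+
  show ?thesis unfolding XX_def blk_mulvec[OF v l(1)] blk_mulvec[OF v l(2)] using d True
    by (simp add: power2_eq_square algebra_simps)
next
  case False
  show ?thesis
  proof (cases t)
    case True
    hence l: "2*m < dimA m t" unfolding dimA_def by auto
    show ?thesis unfolding XX_def blk_mulvec[OF v l] using False True
      by (simp add: power2_eq_square algebra_simps)
  qed (simp add: XX_def False)
qed

lemma XX_smult:
  assumes v: "v \<in> carrier_vec (dimA m t)" and j: "j \<in> {1..m+1}"
  shows "XX m t (r \<cdot>\<^sub>v v) j = r\<^sup>2 * XX m t v j"
proof (cases "j \<le> m")
  case True
  have l: "2*(j-1) < dimA m t" "2*(j-1)+1 < dimA m t" using True j dimA_ge[of m t] by auto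
  show ?thesis unfolding XX_def using l v True by (simp add: power2_eq_square algebra_simps)
next
  case False
  show ?thesis
  proof (cases t)
    case True
    hence l: "2*m < dimA m t" unfolding dimA_def by auto
    show ?thesis unfolding XX_def using l v False True by (simp add: power2_eq_square algebra_simps)
  qed (simp add: XX_def False)
qed



definition ff :: "real \<Rightarrow> real \<Rightarrow> real" where "ff g c = 1 - 2*g*c + g^2"

definition half :: "(nat \<Rightarrow> real) \<Rightarrow> nat \<Rightarrow> (nat \<Rightarrow> real) \<Rightarrow> nat \<Rightarrow> real" where
  "half k M x j = ff (\<Sum>i=1..M. k i * x i) (k j) * x j / (\<Sum>i=1..M. ff (\<Sum>l=1..M. k l * x l) (k i) * x i)"

definition valid :: "nat \<Rightarrow> (nat \<Rightarrow> real) \<Rightarrow> bool" where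
  "valid M x \<longleftrightarrow> (\<forall>i\<in>{1..M}. 0 \<le> x i) \<and> (\<Sum>i=1..M. x i) = 1 \<and> 0 < x 1"

definition TT :: "nat \<Rightarrow> (nat \<Rightarrow> real) \<Rightarrow> real" where
  "TT M x = (\<Sum>i=2..M. x i) / x 1"

lemma split1: "1 \<le> (M::nat) \<Longrightarrow> (\<Sum>i=1..M. f i) = f 1 + (\<Sum>i=2..M. (f i :: real))"
proof -
  assume "1 \<le> M"
  hence "{1..M} = insert 1 {2..M}" by auto
  thus ?thesis by simp
qed

lemma TT_nonneg: "valid M x \<Longrightarrow> 0 \<le> TT M x"
  unfolding valid_def TT_def by (auto intro!: sum_nonneg divide_nonneg_pos)

lemma half_lemma:
  assumes M: "1 \<le> M" and kpos: "0 < k 1" and kd: "k 1 < d" and d1: "d \<le> 1"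
    and kr: "\<forall>i\<in>{1..M}. k 1 \<le> k i \<and> k i \<le> 1" and kJ: "\<forall>i\<in>{2..M}. d \<le> k i"
    and x: "valid M x"
    and q: "q = 1 - k 1 * (d - k 1) / (1 - k 1)"
  shows "valid M (half k M x) \<and> TT M (half k M x) \<le> q * TT M x
         \<and> (\<forall>j\<in>{2..M}. half k M x j \<le> q * (1 + TT M x) * x j)"
proof -
  define a where "a = (\<Sum>i=1..M. k i * x i)"
  define N where "N = (\<Sum>i=1..M. ff a (k i) * x i)"
  have hx: "\<And>j. half k M x j = ff a (k j) * x j / N" unfolding half_def a_def N_def by simp
  have xnn: "\<forall>i\<in>{1..M}. 0 \<le> x i" and xs: "(\<Sum>i=1..M. x i) = 1" and x1: "0 < x 1"
    using x unfolding valid_def by auto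
  have k1: "k 1 < 1" using kd d1 by simp
  have "a \<ge> (\<Sum>i=1..M. k 1 * x i)" unfolding a_def
    using xnn kr by (intro sum_mono) (simp add: mult_right_mono)
  hence a1: "a \<ge> k 1" using xs by (simp add: sum_distrib_left[symmetric])
  have "a \<le> (\<Sum>i=1..M. x i)" unfolding a_def
  proof (rule sum_mono)
    fix i assume i: "i \<in> {1..M}"
    hence "0 \<le> x i" "k i \<le> 1" using xnn kr by auto
    hence "k i * x i \<le> 1 * x i" by (rule mult_right_mono[rotated])
    thus "k i * x i \<le> x i" by simp
  qed
  hence a2: "a \<le> 1" using xs by simp
  have ffsq: "\<And>c. ff a c = (a - c)^2 + (1 - c^2)" unfolding ff_def by (simp add: power2_eq_square algebra_simps)
  have ffnn: "\<And>i. i \<in> {1..M} \<Longrightarrow> 0 \<le> ff a (k i)"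
  proof -
    fix i assume i: "i \<in> {1..M}"
    have "0 \<le> k i" "k i \<le> 1" using kr i kpos by force+
    hence "k i ^ 2 \<le> 1" by (simp add: power_le_one)
    thus "0 \<le> ff a (k i)" unfolding ffsq by (simp add: add_nonneg_nonneg)
  qed
  define F1 where "F1 = ff a (k 1)"
  have F1pos: "0 < F1"
  proof -
    have "k 1 ^ 2 < 1" using kpos k1 by (simp add: power2_eq_square) (metis mult_less_cancel_right2 less_trans mult_strict_right_mono mult_1 mult.commute)
    thus ?thesis unfolding F1_def ffsq by (simp add: add_nonneg_pos)
  qed
  have F1le: "F1 \<le> 2 - 2 * k 1"
  proof -
    have "(a - 1) * (a + 1) \<le> (a - 1) * (2 * k 1)" using a1 a2 k1
      by (intro mult_left_mono_neg) auto
    thus ?thesis unfolding F1_def ff_def by (simp add: power2_eq_square algebra_simps)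
  qed
  have qlt: "q < 1" unfolding q using kpos kd k1 by (simp add: divide_pos_pos)
  have qge: "0 \<le> q"
  proof -
    have "k 1 * (d - k 1) \<le> 1 * (1 - k 1)" using kpos kd d1 k1
      by (intro mult_mono) auto
    hence "k 1 * (d - k 1) / (1 - k 1) \<le> 1" using k1 by (simp add: divide_le_eq)
    thus ?thesis unfolding q by simp
  qed
  have ffJ: "\<And>j. j \<in> {2..M} \<Longrightarrow> ff a (k j) \<le> q * F1"
  proof -
    fix j assume j: "j \<in> {2..M}"
    have e: "ff a (k j) = F1 - 2 * a * (k j - k 1)" unfolding F1_def ff_def by (simp add: algebra_simps)
    have "k 1 * (d - k 1) \<le> a * (k j - k 1)" using a1 kpos kd kJ j by (intro mult_mono) auto
    hence "ff a (k j) \<le> F1 - 2 * (k 1 * (d - k 1))" unfolding e by simp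
    also have "\<dots> \<le> q * F1"
    proof -
      have D: "0 \<le> k 1 * (d - k 1)" using kpos kd by simp
      have "k 1 * (d - k 1) * F1 \<le> k 1 * (d - k 1) * (2 * (1 - k 1))"
        using F1le D by (intro mult_left_mono) auto
      hence "k 1 * (d - k 1) / (1 - k 1) * F1 \<le> 2 * (k 1 * (d - k 1))"
        using k1 by (simp add: field_simps)
      thus ?thesis unfolding q by (simp add: algebra_simps)
    qed
    finally show "ff a (k j) \<le> q * F1" .
  qed
  have Nsplit: "N = F1 * x 1 + (\<Sum>i=2..M. ff a (k i) * x i)"
    unfolding N_def F1_def using split1[OF M] by simp
  have restnn: "0 \<le> (\<Sum>i=2..M. ff a (k i) * x i)"
    using ffnn xnn by (intro sum_nonneg) auto
  have NF: "F1 * x 1 \<le> N" using Nsplit restnn by simp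
  have F1x1: "0 < F1 * x 1" using F1pos x1 by simp
  have Npos: "0 < N" using NF F1x1 by simp
  have v1: "valid M (half k M x)"
    unfolding valid_def hx
  proof (intro conjI ballI)
    fix i assume "i \<in> {1..M}" thus "0 \<le> ff a (k i) * x i / N" using ffnn xnn Npos by simp
  next
    show "(\<Sum>i = 1..M. ff a (k i) * x i / N) = 1" using Npos
      by (simp add: sum_divide_distrib[symmetric] N_def)
  next
    show "0 < ff a (k 1) * x 1 / N" using F1x1 Npos F1_def by simp
  qed
  have sJ: "(\<Sum>i=2..M. ff a (k i) * x i) \<le> (\<Sum>i=2..M. q * F1 * x i)"
    using ffJ xnn M by (intro sum_mono mult_right_mono) auto
  have TT1: "TT M (half k M x) \<le> q * TT M x"
  proof -
    have "TT M (half k M x) = (\<Sum>i=2..M. ff a (k i) * x i) / (F1 * x 1)"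
      unfolding TT_def hx using Npos by (simp add: sum_divide_distrib[symmetric] F1_def)
    also have "\<dots> \<le> (\<Sum>i=2..M. q * F1 * x i) / (F1 * x 1)"
      using sJ F1x1 by (simp add: divide_right_mono)
    also have "\<dots> = q * TT M x" unfolding TT_def using F1pos
      by (simp add: sum_distrib_left[symmetric])
    finally show ?thesis .
  qed
  have inv: "1 / x 1 = 1 + TT M x"
  proof -
    have "1 = x 1 + (\<Sum>i=2..M. x i)" using xs split1[OF M, of x] by simp
    thus ?thesis unfolding TT_def using x1 by (simp add: field_simps)
  qed
  have bnd: "\<forall>j\<in>{2..M}. half k M x j \<le> q * (1 + TT M x) * x j"
  proof
    fix j assume j: "j \<in> {2..M}"
    have xj: "0 \<le> x j" using xnn j by auto
    have ffj: "0 \<le> ff a (k j)" using ffnn j by auto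
    have "half k M x j = ff a (k j) * x j / N" by (rule hx)
    also have "\<dots> \<le> ff a (k j) * x j / (F1 * x 1)"
      using NF F1x1 ffj xj by (intro divide_left_mono) auto
    also have "\<dots> \<le> q * F1 * x j / (F1 * x 1)"
      using ffJ[OF j] xj F1x1 by (intro divide_right_mono mult_right_mono) auto
    also have "\<dots> = q * (1 / x 1) * x j" using F1pos by simp
    finally show "half k M x j \<le> q * (1 + TT M x) * x j" unfolding inv .
  qed
  show ?thesis using v1 TT1 bnd by blast
qed

lemma valid_cong: "\<forall>i\<in>{1..M}. x i = y i \<Longrightarrow> 1 \<le> M \<Longrightarrow> valid M x = valid M y"
proof -
  assume h: "\<forall>i\<in>{1..M}. x i = y i" and M: "1 \<le> M"
  have "sum x {1..M} = sum y {1..M}" using h by (intro sum.cong) auto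
  moreover have "x 1 = y 1" using h M by auto
  ultimately show ?thesis unfolding valid_def using h by auto
qed

lemma TT_cong: "\<forall>i\<in>{1..M}. x i = y i \<Longrightarrow> 1 \<le> M \<Longrightarrow> TT M x = TT M y"
proof -
  assume h: "\<forall>i\<in>{1..M}. x i = y i" and M: "1 \<le> M"
  have "sum x {2..M} = sum y {2..M}" using h by (intro sum.cong) auto
  moreover have "x 1 = y 1" using h M by auto
  ultimately show ?thesis unfolding TT_def by auto
qed

lemma step_lemma:
  assumes M: "1 \<le> M" and kpos: "0 < k 1" and kd: "k 1 < d" and d1: "d \<le> 1"
    and kr: "\<forall>i\<in>{1..M}. k 1 \<le> k i \<and> k i \<le> 1" and kJ: "\<forall>i\<in>{2..M}. d \<le> k i"
    and x: "valid M x"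
    and q: "q = 1 - k 1 * (d - k 1) / (1 - k 1)"
  shows "valid M (half k M (half k M x)) \<and> TT M (half k M (half k M x)) \<le> q\<^sup>2 * TT M x
         \<and> (\<forall>j\<in>{2..M}. half k M (half k M x) j \<le> (q * (1 + TT M x))\<^sup>2 * x j)"
proof -
  note H1 = half_lemma[OF M kpos kd d1 kr kJ x q]
  let ?y = "half k M x"
  have y: "valid M ?y" using H1 by blast
  note H2 = half_lemma[OF M kpos kd d1 kr kJ y q]
  have k1: "k 1 < 1" using kd d1 by simp
  have qge: "0 \<le> q"
  proof -
    have "k 1 * (d - k 1) \<le> 1 * (1 - k 1)" using kpos kd d1 k1
      by (intro mult_mono) auto
    hence "k 1 * (d - k 1) / (1 - k 1) \<le> 1" using k1 by (simp add: divide_le_eq)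
    thus ?thesis unfolding q by simp
  qed
  have qle: "q \<le> 1" unfolding q using kpos kd k1 by (simp add: divide_pos_pos)
  have Tx: "0 \<le> TT M x" by (rule TT_nonneg[OF x])
  have Ty: "TT M ?y \<le> q * TT M x" using H1 by blast
  have Ty': "TT M ?y \<le> TT M x" using Ty qle Tx by (meson mult_left_le_one_le order_trans qge)
  have T2: "TT M (half k M ?y) \<le> q\<^sup>2 * TT M x"
  proof -
    have "TT M (half k M ?y) \<le> q * TT M ?y" using H2 by blast
    also have "\<dots> \<le> q * (q * TT M x)" using Ty qge by (rule mult_left_mono)
    finally show ?thesis by (simp add: power2_eq_square)
  qed
  have B: "\<forall>j\<in>{2..M}. half k M ?y j \<le> (q * (1 + TT M x))\<^sup>2 * x j"
  proof
    fix j assume j: "j \<in> {2..M}"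
    have yj: "0 \<le> ?y j" using y j unfolding valid_def by auto
    have "half k M ?y j \<le> q * (1 + TT M ?y) * ?y j" using H2 j by blast
    also have "\<dots> \<le> q * (1 + TT M x) * ?y j"
      using Ty' qge yj by (intro mult_right_mono mult_left_mono) auto
    also have "\<dots> \<le> q * (1 + TT M x) * (q * (1 + TT M x) * x j)"
      using H1 j qge Tx by (intro mult_left_mono) auto
    finally show "half k M ?y j \<le> (q * (1 + TT M x))\<^sup>2 * x j" by (simp add: power2_eq_square algebra_simps)
  qed
  show ?thesis using H2 T2 B by blast
qed

lemma iter_lemma:
  fixes X :: "nat \<Rightarrow> nat \<Rightarrow> real"
  assumes M: "1 \<le> M" and kpos: "0 < k 1" and kd: "k 1 < d" and d1: "d \<le> 1"
    and kr: "\<forall>i\<in>{1..M}. k 1 \<le> k i \<and> k i \<le> 1" and kJ: "\<forall>i\<in>{2..M}. d \<le> k i"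
    and X0: "valid M (X 0)"
    and rec: "\<And>n. \<forall>j\<in>{1..M}. X (Suc n) j = half k M (half k M (X n)) j"
  shows "\<exists>n0 \<rho>. 0 < \<rho> \<and> \<rho> < 1 \<and> (\<forall>n\<ge>n0. \<forall>j\<in>{2..M}. X (Suc n) j \<le> \<rho>\<^sup>2 * X n j)"
proof -
  define q where "q = 1 - k 1 * (d - k 1) / (1 - k 1)"
  note S = step_lemma[OF M kpos kd d1 kr kJ _ q_def]
  have k1: "k 1 < 1" using kd d1 by simp
  have qge: "0 \<le> q"
  proof -
    have "k 1 * (d - k 1) \<le> 1 * (1 - k 1)" using kpos kd d1 k1
      by (intro mult_mono) auto
    hence "k 1 * (d - k 1) / (1 - k 1) \<le> 1" using k1 by (simp add: divide_le_eq)
    thus ?thesis unfolding q_def by simp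
  qed
  have qlt: "q < 1" unfolding q_def using kpos kd k1 by (simp add: divide_pos_pos)
  have V: "valid M (X n)" for n
  proof (induction n)
    case (Suc n)
    have "valid M (half k M (half k M (X n)))" using S[OF Suc] by blast
    thus ?case using valid_cong[OF rec M] by blast
  qed (rule X0)
  have T: "TT M (X n) \<le> (q\<^sup>2)^n * TT M (X 0)" for n
  proof (induction n)
    case (Suc n)
    have "TT M (X (Suc n)) = TT M (half k M (half k M (X n)))" using TT_cong[OF rec M] by blast
    also have "\<dots> \<le> q\<^sup>2 * TT M (X n)" using S[OF V] by blast
    also have "\<dots> \<le> q\<^sup>2 * ((q\<^sup>2)^n * TT M (X 0))" using Suc by (intro mult_left_mono) auto
    finally show ?case by simp
  qed simp
  define \<epsilon> where "\<epsilon> = (1 - q) / 2"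
  define \<rho> where "\<rho> = (1 + q) / 2"
  have ep: "0 < \<epsilon>" unfolding \<epsilon>_def using qlt by simp
  have T0: "0 \<le> TT M (X 0)" by (rule TT_nonneg[OF X0])
  have q2: "q\<^sup>2 < 1" using qge qlt by (simp add: power_less_one_iff abs_square_less_1)
  obtain n0 where n0: "(q\<^sup>2)^n0 < \<epsilon> / (TT M (X 0) + 1)"
    using real_arch_pow_inv[of "\<epsilon> / (TT M (X 0) + 1)" "q\<^sup>2"] ep T0 q2 by auto
  have small: "TT M (X n) \<le> \<epsilon>" if "n \<ge> n0" for n
  proof -
    have "TT M (X n) \<le> (q\<^sup>2)^n * TT M (X 0)" by (rule T)
    also have "\<dots> \<le> (q\<^sup>2)^n0 * TT M (X 0)"
      using that q2 T0 by (intro mult_right_mono power_decreasing) auto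
    also have "\<dots> \<le> (q\<^sup>2)^n0 * (TT M (X 0) + 1)" by (intro mult_left_mono) auto
    also have "\<dots> \<le> \<epsilon>" using n0 T0 by (simp add: pos_less_divide_eq less_imp_le)
    finally show ?thesis .
  qed
  have "\<forall>n\<ge>n0. \<forall>j\<in>{2..M}. X (Suc n) j \<le> \<rho>\<^sup>2 * X n j"
  proof (intro allI impI ballI)
    fix n j assume n: "n0 \<le> n" and j: "j \<in> {2..M}"
    have j1: "j \<in> {1..M}" using j by auto
    have xj: "0 \<le> X n j" using V[of n] j1 unfolding valid_def by auto
    have Tn: "0 \<le> TT M (X n)" by (rule TT_nonneg[OF V])
    have a: "0 \<le> q * (1 + TT M (X n))" using qge Tn by simp
    have "q * (1 + TT M (X n)) \<le> q * (1 + \<epsilon>)" using small[OF n] qge by (intro mult_left_mono) auto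
    also have "\<dots> \<le> \<rho>"
    proof -
      have "q * \<epsilon> \<le> \<epsilon>" using qge qlt ep by (intro mult_left_le_one_le) auto
      moreover have "q + \<epsilon> = \<rho>" unfolding \<rho>_def \<epsilon>_def by (simp add: field_simps)
      ultimately show ?thesis by (simp add: algebra_simps)
    qed
    finally have b: "q * (1 + TT M (X n)) \<le> \<rho>" .
    have "X (Suc n) j = half k M (half k M (X n)) j" using rec j1 by blast
    also have "\<dots> \<le> (q * (1 + TT M (X n)))\<^sup>2 * X n j" using S[OF V] j by blast
    also have "\<dots> \<le> \<rho>\<^sup>2 * X n j" using a b xj by (intro mult_right_mono power_mono) auto
    finally show "X (Suc n) j \<le> \<rho>\<^sup>2 * X n j" .
  qed
  moreover have "0 < \<rho>" "\<rho> < 1" unfolding \<rho>_def using qge qlt by auto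
  ultimately show ?thesis by blast
qed


lemma half_cong: "\<forall>i\<in>{1..M}. x i = y i \<Longrightarrow> j \<in> {1..M} \<Longrightarrow> half k M x j = half k M y j"
proof -
  assume h: "\<forall>i\<in>{1..M}. x i = y i" and j: "j \<in> {1..M}"
  have 1: "(\<Sum>i=1..M. k i * x i) = (\<Sum>i=1..M. k i * y i)" using h by (intro sum.cong) auto
  have 2: "(\<Sum>i=1..M. ff (\<Sum>l=1..M. k l * y l) (k i) * x i) = (\<Sum>i=1..M. ff (\<Sum>l=1..M. k l * y l) (k i) * y i)"
    using h by (intro sum.cong) auto
  show ?thesis unfolding half_def 1 2 using h j by simp
qed

lemma alpha_eq:
  assumes v: "v \<in> carrier_vec (dimA m t)"
  shows "v \<bullet> (blk m t c S 1 *\<^sub>v v) = (\<Sum>j=1..m+1. cc m c j * XX m t v j)"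
proof -
  have "(\<Sum>j=1..m. c j * XX m t v j) = (\<Sum>j=1..m. cc m c j * XX m t v j)"
    by (intro sum.cong) (auto simp: cc_def)
  thus ?thesis unfolding quad[OF v] sumI by (simp add: cc_def XX_def)
qed

lemma half_vec:
  assumes v: "v \<in> carrier_vec (dimA m t)" and cS: "\<forall>j\<in>{1..m}. (c j)\<^sup>2 + (S j)\<^sup>2 = 1"
    and g: "\<gamma> = (\<Sum>j=1..m+1. cc m c j * XX m t v j)"
    and wt: "wt = blk m t (\<lambda>j. c j - \<gamma>) S (1 - \<gamma>) *\<^sub>v v"
  shows "(1 / vnorm wt) \<cdot>\<^sub>v wt \<in> carrier_vec (dimA m t) \<and>
    (\<forall>j\<in>{1..m+1}. XX m t ((1 / vnorm wt) \<cdot>\<^sub>v wt) j = half (cc m c) (m+1) (XX m t v) j)"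
proof -
  have wtc: "wt \<in> carrier_vec (dimA m t)" unfolding wt by (rule mult_mat_vec_carrier[OF blk_carrier v])
  have Xw: "XX m t wt j = ff \<gamma> (cc m c j) * XX m t v j" if j: "j \<in> {1..m+1}" for j
  proof (cases "j \<le> m")
    case True
    have "(c j - \<gamma>)\<^sup>2 + (S j)\<^sup>2 = ff \<gamma> (c j)" using cS True j
      unfolding ff_def by (auto simp: power2_eq_square algebra_simps)
    thus ?thesis unfolding wt XX_lin[OF v j] using True by (simp add: cc_def)
  next
    case False
    thus ?thesis unfolding wt XX_lin[OF v j] using False
      by (simp add: cc_def ff_def power2_eq_square algebra_simps)
  qed
  define N where "N = (\<Sum>j=1..m+1. ff \<gamma> (cc m c j) * XX m t v j)"
  have ww: "wt \<bullet> wt = N" unfolding norm_sq[OF wtc] N_def using Xw by (intro sum.cong) auto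
  have Nnn: "0 \<le> N" using ww norm_sq[OF wtc] XX_nonneg by (metis sum_nonneg)
  have r: "(1 / vnorm wt)\<^sup>2 = 1 / N" unfolding vnorm_def ww using Nnn
    by (simp add: power_divide)
  show ?thesis
  proof (intro conjI ballI)
    show "(1 / vnorm wt) \<cdot>\<^sub>v wt \<in> carrier_vec (dimA m t)" using wtc by simp
  next
    fix j assume j: "j \<in> {1..m+1}"
    show "XX m t ((1 / vnorm wt) \<cdot>\<^sub>v wt) j = half (cc m c) (m+1) (XX m t v) j"
      unfolding XX_smult[OF wtc j] r Xw[OF j] half_def g[symmetric] N_def[symmetric]
      by simp
  qed
qed

lemma step_vec:
  assumes v: "v \<in> carrier_vec (dimA m t)" and cs: "\<forall>j\<in>{1..m}. (c j)\<^sup>2 + (s j)\<^sup>2 = 1"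
  shows "aci_step (blockA m t c s) v \<in> carrier_vec (dimA m t) \<and>
    (\<forall>j\<in>{1..m+1}. XX m t (aci_step (blockA m t c s) v) j
        = half (cc m c) (m+1) (half (cc m c) (m+1) (XX m t v)) j)"
proof -
  let ?A = "blk m t c s 1"
  let ?n = "dimA m t"
  define \<alpha> where "\<alpha> = v \<bullet> (?A *\<^sub>v v)"
  define wt where "wt = (?A - \<alpha> \<cdot>\<^sub>m 1\<^sub>m ?n) *\<^sub>v v"
  define w where "w = (1 / vnorm wt) \<cdot>\<^sub>v wt"
  define \<beta> where "\<beta> = w \<bullet> (?A *\<^sub>v w)"
  define vt where "vt = (transpose_mat ?A - \<beta> \<cdot>\<^sub>m 1\<^sub>m ?n) *\<^sub>v w"
  have st: "aci_step (blockA m t c s) v = (1 / vnorm vt) \<cdot>\<^sub>v vt"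
    unfolding aci_step_def Let_def blockA_blk vt_def \<beta>_def w_def wt_def \<alpha>_def by simp
  have a: "\<alpha> = (\<Sum>j=1..m+1. cc m c j * XX m t v j)" unfolding \<alpha>_def by (rule alpha_eq[OF v])
  have wt': "wt = blk m t (\<lambda>j. c j - \<alpha>) s (1 - \<alpha>) *\<^sub>v v" unfolding wt_def blk_minus ..
  note H1 = half_vec[OF v cs a wt']
  have wc: "w \<in> carrier_vec ?n" and Xw: "\<forall>j\<in>{1..m+1}. XX m t w j = half (cc m c) (m+1) (XX m t v) j"
    using H1 unfolding w_def by auto
  have b: "\<beta> = (\<Sum>j=1..m+1. cc m c j * XX m t w j)" unfolding \<beta>_def by (rule alpha_eq[OF wc])
  have cs': "\<forall>j\<in>{1..m}. (c j)\<^sup>2 + (- s j)\<^sup>2 = 1" using cs by simp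
  have vt': "vt = blk m t (\<lambda>j. c j - \<beta>) (\<lambda>j. - s j) (1 - \<beta>) *\<^sub>v w"
    unfolding vt_def blk_transpose blk_minus ..
  note H2 = half_vec[OF wc cs' b vt']
  show ?thesis unfolding st
  proof (intro conjI ballI)
    show "(1 / vnorm vt) \<cdot>\<^sub>v vt \<in> carrier_vec ?n" using H2 by blast
  next
    fix j assume j: "j \<in> {1..m+1}"
    have "XX m t ((1 / vnorm vt) \<cdot>\<^sub>v vt) j = half (cc m c) (m+1) (XX m t w) j" using H2 j by blast
    also have "\<dots> = half (cc m c) (m+1) (half (cc m c) (m+1) (XX m t v)) j"
      by (rule half_cong[OF Xw j])
    finally show "XX m t ((1 / vnorm vt) \<cdot>\<^sub>v vt) j = half (cc m c) (m+1) (half (cc m c) (m+1) (XX m t v)) j" .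
  qed
qed

lemma chain:
  assumes inc: "\<forall>j\<in>{1..<m}. (c::nat\<Rightarrow>real) j < c (j + 1)"
  shows "1 \<le> a \<Longrightarrow> a \<le> b \<Longrightarrow> b \<le> m \<Longrightarrow> c a \<le> c b"
proof (induction b)
  case (Suc b)
  show ?case
  proof (cases "a = Suc b")
    case False
    hence "a \<le> b" using Suc by simp
    hence "c a \<le> c b" using Suc by simp
    also have "c b < c (Suc b)" using inc Suc \<open>a \<le> b\<close> by auto
    finally show ?thesis by simp
  qed simp
qed simp

lemma blk_norm_XX: "1 \<le> j \<Longrightarrow> j \<le> m \<Longrightarrow> blk_norm v j = sqrt (XX m t v j)"
  unfolding blk_norm_def XX_def by simp

lemma last_norm_XX: "t \<Longrightarrow> last_norm m v = sqrt (XX m t v (m+1))"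
  unfolding last_norm_def XX_def by simp

lemma sqrt_bound: "0 < \<rho> \<Longrightarrow> x' \<le> \<rho>\<^sup>2 * x \<Longrightarrow> sqrt x' \<le> \<rho> * sqrt (x::real)"
proof -
  assume r: "0 < \<rho>" and h: "x' \<le> \<rho>\<^sup>2 * x"
  have "sqrt x' \<le> sqrt (\<rho>\<^sup>2 * x)" using h by simp
  also have "\<dots> = \<rho> * sqrt x" using r by (simp add: real_sqrt_mult)
  finally show ?thesis .
qed

theorem lemma4p6:
  fixes m :: nat and t :: bool and c s :: "nat \<Rightarrow> real" and v0 :: "real vec"
  assumes m_pos: "m \<ge> 1"
    and cs: "\<forall>j\<in>{1..m}. (c j)\<^sup>2 + (s j)\<^sup>2 = 1"
    and s_nz: "\<forall>j\<in>{1..m}. s j \<noteq> 0"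
    and c_pos: "0 < c 1"
    and c_incr: "\<forall>j\<in>{1..<m}. c j < c (j + 1)"
    and v0_dim: "v0 \<in> carrier_vec (dimA m t)"
    and v0_unit: "vnorm v0 = 1"
    and grade: "grade (blockA m t c s) v0 \<ge> 2"
    and v01: "blk_norm v0 1 \<noteq> 0"
  shows "\<exists>k0 (\<rho>::real). 0 < \<rho> \<and> \<rho> < 1 \<and>
           (\<forall>k\<ge>k0.
              (\<forall>j\<in>{2..m}. blk_norm (aci (blockA m t c s) v0 (Suc k)) j
                              \<le> \<rho> * blk_norm (aci (blockA m t c s) v0 k) j)
            \<and> (t \<longrightarrow> last_norm m (aci (blockA m t c s) v0 (Suc k))
                              \<le> \<rho> * last_norm m (aci (blockA m t c s) v0 k)))"
proof -
  let ?A = "blockA m t c s"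
  let ?M = "m + 1"
  let ?k = "cc m c"
  define d where "d = cc m c 2"
  define X where "X n = XX m t (aci ?A v0 n)" for n
  have car: "aci ?A v0 n \<in> carrier_vec (dimA m t)" for n
  proof (induction n)
    case (Suc n) thus ?case using step_vec[OF Suc cs] by simp
  qed (simp add: v0_dim)
  have rec: "\<forall>j\<in>{1..?M}. X (Suc n) j = half ?k ?M (half ?k ?M (X n)) j" for n
    unfolding X_def using step_vec[OF car cs] by simp
  have cle1: "c j \<le> 1" if "j \<in> {1..m}" for j
  proof -
    have e: "(c j)\<^sup>2 + (s j)\<^sup>2 = 1" using cs that by auto
    have "0 \<le> (s j)\<^sup>2" by simp
    hence "(c j)\<^sup>2 \<le> 1" using e by linarith
    hence "(c j)\<^sup>2 \<le> 1\<^sup>2" by simp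
    thus ?thesis by (rule power2_le_imp_le) simp
  qed
  have c1lt: "c 1 < 1"
  proof -
    have p: "(s 1)\<^sup>2 > 0" using s_nz m_pos by simp
    have e: "(c 1)\<^sup>2 + (s 1)\<^sup>2 = 1" using cs m_pos by auto
    have "(c 1)\<^sup>2 < 1" using p e by linarith
    hence "(c 1)\<^sup>2 < 1\<^sup>2" by simp
    thus ?thesis by (rule power_less_imp_less_base) simp
  qed
  have M1: "1 \<le> ?M" by simp
  have kpos: "0 < ?k 1" using c_pos m_pos by (simp add: cc_def)
  have kd: "?k 1 < d"
  proof (cases "2 \<le> m")
    case True
    have "1 \<in> {1..<m}" using True by auto
    hence "c 1 < c (1 + 1)" using c_incr by blast
    hence "c 1 < c 2" by (simp add: numeral_2_eq_2)
    thus ?thesis using True by (simp add: cc_def d_def)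
  next
    case False thus ?thesis using c1lt m_pos by (simp add: cc_def d_def)
  qed
  have d1: "d \<le> 1" unfolding d_def cc_def using cle1 by auto
  have kr: "\<forall>i\<in>{1..?M}. ?k 1 \<le> ?k i \<and> ?k i \<le> 1"
  proof
    fix i assume i: "i \<in> {1..?M}"
    show "?k 1 \<le> ?k i \<and> ?k i \<le> 1"
    proof (cases "i \<le> m")
      case True thus ?thesis using i m_pos chain[OF c_incr, of 1 i] cle1[of i] by (simp add: cc_def)
    next
      case False thus ?thesis using m_pos c1lt by (simp add: cc_def)
    qed
  qed
  have kJ: "\<forall>i\<in>{2..?M}. d \<le> ?k i"
  proof
    fix i assume i: "i \<in> {2..?M}"
    show "d \<le> ?k i"
    proof (cases "i \<le> m")
      case True thus ?thesis using i chain[OF c_incr, of 2 i] by (simp add: cc_def d_def)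
    next
      case False thus ?thesis using d1 by (simp add: cc_def)
    qed
  qed
  have X0: "valid ?M (X 0)"
    unfolding valid_def
  proof (intro conjI ballI)
    fix i show "0 \<le> X 0 i" unfolding X_def by (rule XX_nonneg)
  next
    have "v0 \<bullet> v0 = 1" using v0_unit unfolding vnorm_def by simp
    thus "(\<Sum>i=1..?M. X 0 i) = 1" using norm_sq[OF v0_dim] unfolding X_def by simp
  next
    have "blk_norm v0 1 = sqrt (X 0 1)" unfolding X_def using blk_norm_XX[of 1 m v0 t] m_pos by simp
    thus "0 < X 0 1" using v01 XX_nonneg[of m t v0 1] unfolding X_def by (simp add: less_le)
  qed
  obtain n0 \<rho> where r: "0 < \<rho>" "\<rho> < 1" and B: "\<forall>n\<ge>n0. \<forall>j\<in>{2..?M}. X (Suc n) j \<le> \<rho>\<^sup>2 * X n j"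
    using iter_lemma[OF M1 kpos kd d1 kr kJ X0 rec] by blast
  have "\<forall>k\<ge>n0.
              (\<forall>j\<in>{2..m}. blk_norm (aci ?A v0 (Suc k)) j \<le> \<rho> * blk_norm (aci ?A v0 k) j)
            \<and> (t \<longrightarrow> last_norm m (aci ?A v0 (Suc k)) \<le> \<rho> * last_norm m (aci ?A v0 k))"
  proof (intro allI impI conjI ballI)
    fix k j assume k: "n0 \<le> k" and j: "j \<in> {2..m}"
    have "X (Suc k) j \<le> \<rho>\<^sup>2 * X k j" using B k j by auto
    thus "blk_norm (aci ?A v0 (Suc k)) j \<le> \<rho> * blk_norm (aci ?A v0 k) j"
      using j blk_norm_XX[of j m _ t] sqrt_bound[OF r(1)] unfolding X_def by auto
  next
    fix k assume k: "n0 \<le> k" and t: t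
    have "X (Suc k) ?M \<le> \<rho>\<^sup>2 * X k ?M" using B k m_pos by auto
    thus "last_norm m (aci ?A v0 (Suc k)) \<le> \<rho> * last_norm m (aci ?A v0 k)"
      using last_norm_XX[OF t] sqrt_bound[OF r(1)] unfolding X_def by auto
  qed
  thus ?thesis using r by blast
qed

end
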